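(* There exists an algebraic structure $A$ with a single operation $f$ of countably infinite arity (i.e. $f:A^{\mathbb N}\to A$) such that the set of all non-generators of $A$ is not a substructure of $A$ (i.e. is not closed under $f$).
   Context: For an algebraic structure $A$ with operation $f:A^{\mathbb N}\to A$, a substructure is a subset closed under $f$. For $X\subseteq A$, $\langle X\rangle$ is the intersection of all substructures containing $X$, and $\langle X,a\rangle=\langle X\cup\{a\}\rangle$. An element $a\in A$ is a non-generator if for every $X\subseteq A$, $\langle X,a\rangle=A$ implies $\langle X\rangle=A$. *)

theory Defs
  imports Main
begin

definition is_structure :: "'a set \<Rightarrow> ((nat \<Rightarrow> 'a) \<Rightarrow> 'a) \<Rightarrow> bool" where
  "is_structure A f \<longleftrightarrow> (\<forall>s. (\<forall>n. s n \<in> A) \<longrightarrow> f s \<in> A)"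

definition substructure :: "'a set \<Rightarrow> ((nat \<Rightarrow> 'a) \<Rightarrow> 'a) \<Rightarrow> 'a set \<Rightarrow> bool" where
  "substructure A f S \<longleftrightarrow> S \<subseteq> A \<and> (\<forall>s. (\<forall>n. s n \<in> S) \<longrightarrow> f s \<in> S)"

definition generated :: "'a set \<Rightarrow> ((nat \<Rightarrow> 'a) \<Rightarrow> 'a) \<Rightarrow> 'a set \<Rightarrow> 'a set" where
  "generated A f X = \<Inter> {S. substructure A f S \<and> X \<subseteq> S}"

definition non_generator :: "'a set \<Rightarrow> ((nat \<Rightarrow> 'a) \<Rightarrow> 'a) \<Rightarrow> 'a \<Rightarrow> bool" where
  "non_generator A f a \<longleftrightarrow> a \<in> A \<and>
     (\<forall>X. X \<subseteq> A \<longrightarrow> generated A f (X \<union> {a}) = A \<longrightarrow> generated A f X = A)"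

end

theory Submission
  imports Defs
begin

definition ff :: "(nat \<Rightarrow> nat set) \<Rightarrow> nat set" where
  "ff s = (if s 0 = {} \<and> s 1 = UNIV then {n. s (Suc (Suc n)) = UNIV}
           else if infinite {n. \<exists>k. s k = {n}} then {} else s 0)"

lemma gen_sub: "substructure UNIV f (generated UNIV f X)"
  unfolding substructure_def generated_def by auto

lemma gen_incl: "X \<subseteq> generated A f X"
  unfolding generated_def by auto

lemma gen_least: "substructure A f S \<Longrightarrow> X \<subseteq> S \<Longrightarrow> generated A f X \<subseteq> S"
  unfolding generated_def by auto

lemma full: assumes "substructure UNIV ff S" "{} \<in> S" "UNIV \<in> S"
  shows "S = UNIV"
proof -
  have "B \<in> S" for B
  proof -
    define s where "s = (\<lambda>n::nat. if n = 0 then {} else if n = 1 then UNIV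
                     else if n - 2 \<in> B then UNIV else ({}::nat set))"
    have "\<forall>n. s n \<in> S" using assms unfolding s_def by auto
    hence "ff s \<in> S" using assms(1) unfolding substructure_def by blast
    moreover have "ff s = B" unfolding ff_def s_def by auto
    ultimately show ?thesis by simp
  qed
  thus ?thesis by auto
qed

lemma add_one: assumes T: "substructure UNIV ff T"
  shows "substructure UNIV ff (T \<union> {{m}})"
  unfolding substructure_def
proof (intro conjI allI impI)
  fix s :: "nat \<Rightarrow> nat set" assume s: "\<forall>n. s n \<in> T \<union> {{m}}"
  show "ff s \<in> T \<union> {{m}}"
  proof (cases "s 0 = {} \<and> s 1 = UNIV")
    case True
    have ne: "(UNIV::nat set) \<noteq> {m}" by (metis Suc_n_not_n UNIV_I singletonD)
    have "{} \<in> T" using s True by (metis Un_iff singletonD insert_not_empty)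
    moreover have "UNIV \<in> T" using s[rule_format, of 1] True ne by auto
    ultimately have "{} \<in> T" "UNIV \<in> T" by auto
    hence "T = UNIV" using full T by blast
    thus ?thesis by simp
  next
    case F: False
    show ?thesis
    proof (cases "infinite {n. \<exists>k. s k = {n}}")
      case False
      thus ?thesis using F s unfolding ff_def by auto
    next
      case True
      hence inf2: "infinite ({n. \<exists>k. s k = {n}} - {m})" by simp
      then obtain n where n: "n \<in> {n. \<exists>k. s k = {n}} - {m}"
        by (metis finite.emptyI ex_in_conv)
      then obtain k0 where k0: "s k0 = {n}" "n \<noteq> m" by auto
      hence yT: "{n} \<in> T" using s by (metis Un_iff singletonD singleton_inject)
      define t where "t = (\<lambda>k. if s k = {m} then {n} else s k)"
      have tT: "\<forall>k. t k \<in> T" using s yT unfolding t_def by auto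
      have "{n. \<exists>k. s k = {n}} - {m} \<subseteq> {n. \<exists>k. t k = {n}}"
        unfolding t_def by auto
      hence inft: "infinite {n. \<exists>k. t k = {n}}" using inf2 finite_subset by blast
      have ne2: "{n} \<noteq> (UNIV::nat set)" by (metis Suc_n_not_n UNIV_I singletonD)
      have nf: "\<not> (t 0 = {} \<and> t 1 = UNIV)"
        using F ne2 unfolding t_def by (auto split: if_splits)
      have "ff t = {}" unfolding ff_def if_not_P[OF nf] if_P[OF inft] by (rule refl)
      moreover have "ff t \<in> T" using T tT unfolding substructure_def by blast
      moreover have "ff s = {}" unfolding ff_def if_not_P[OF F] if_P[OF True] by (rule refl)
      ultimately show ?thesis by (metis UnI1)
    qed
  qed
qed blast

lemma single_ng: "non_generator UNIV ff {m}"
  unfolding non_generator_def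
proof (intro conjI allI impI)
  fix X :: "nat set set"
  assume h: "generated UNIV ff (X \<union> {{m}}) = UNIV"
  let ?T = "generated UNIV ff X"
  have "X \<union> {{m}} \<subseteq> ?T \<union> {{m}}" using gen_incl[of X UNIV ff] by blast
  hence "generated UNIV ff (X \<union> {{m}}) \<subseteq> ?T \<union> {{m}}"
    by (rule gen_least[OF add_one[OF gen_sub]])
  hence sub: "UNIV - {{m}} \<subseteq> ?T" using h by blast
  have ne: "(UNIV::nat set) \<noteq> {m}" by (metis Suc_n_not_n UNIV_I singletonD)
  have "{} \<in> ?T" using sub by blast
  moreover have "UNIV \<in> ?T" using sub ne by blast
  ultimately show "?T = UNIV" using full[OF gen_sub] by blast
qed simp

lemma empty_not_ng: "\<not> non_generator UNIV ff {}"
proof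
  assume a: "non_generator UNIV ff {}"
  have i: "{UNIV} \<union> {{}} \<subseteq> generated UNIV ff ({UNIV} \<union> {{}})" by (rule gen_incl)
  have "generated UNIV ff ({UNIV} \<union> {{}}) = UNIV"
    by (rule full[OF gen_sub]) (use i in auto)
  hence g: "generated UNIV ff {UNIV} = UNIV" using a unfolding non_generator_def by blast
  have "substructure UNIV ff {UNIV}"
    unfolding substructure_def
  proof (intro conjI allI impI)
    fix s :: "nat \<Rightarrow> nat set" assume s: "\<forall>n. s n \<in> {UNIV}"
    hence s0: "s 0 = UNIV" by auto
    have "{n. \<exists>k. s k = {n}} = {}"
    proof -
      have "s k \<noteq> {n}" for k n using s by (metis Suc_n_not_n UNIV_I singletonD)
      thus ?thesis by blast
    qed
    hence "ff s = s 0" unfolding ff_def using s0 by simp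
    thus "ff s \<in> {UNIV}" using s0 by simp
  qed blast
  hence "generated UNIV ff {UNIV} \<subseteq> {UNIV}" by (rule gen_least) simp
  moreover have "{} \<in> generated UNIV ff {UNIV}" using g by blast
  ultimately show False by blast
qed

theorem corollary7:
  shows "\<exists>(A :: nat set set) (f :: (nat \<Rightarrow> nat set) \<Rightarrow> nat set).
           is_structure A f \<and> \<not> substructure A f {a. non_generator A f a}"
proof (intro exI conjI)
  show "is_structure UNIV ff" unfolding is_structure_def by (intro allI impI UNIV_I)
  show "\<not> substructure UNIV ff {a. non_generator UNIV ff a}"
  proof
    assume sub: "substructure UNIV ff {a. non_generator UNIV ff a}"
    have all: "\<forall>n. (\<lambda>n. {n}) n \<in> {a. non_generator UNIV ff a}"
      using single_ng by (intro allI CollectI)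
    have "ff (\<lambda>n. {n}) \<in> {a. non_generator UNIV ff a}"
    proof -
      have h: "\<forall>s. (\<forall>n. s n \<in> {a. non_generator UNIV ff a}) \<longrightarrow> ff s \<in> {a. non_generator UNIV ff a}"
        using sub unfolding substructure_def by (rule conjunct2)
      show ?thesis by (rule mp[OF spec[OF h, of "\<lambda>n. {n}"] all])
    qed
    moreover have "ff (\<lambda>n. {n}) = {}"
    proof -
      have e: "{n. \<exists>k. {k} = {n::nat}} = UNIV" by blast
      have "infinite {n. \<exists>k. (\<lambda>n. {n}) k = {n::nat}}" unfolding e by (rule infinite_UNIV_nat)
      moreover have "\<not> ({0} = ({}::nat set) \<and> {1} = (UNIV::nat set))" by blast
      ultimately show ?thesis unfolding ff_def by simp
    qed
    ultimately have "non_generator UNIV ff {}" by simp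
    thus False using empty_not_ng by contradiction
  qed
qed

end
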